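(* There exists a $3$-subset-regular, $5$-uniform, intersecting family $\mathcal{F}\subseteq\binom{[11]}{5}$ with $$|\mathcal{F}|=66=\frac{\binom{11}{5}}{1+\binom{6}{5}\big/\binom{1}{0}},$$ i.e. attaining equality in the bound $|\mathcal{F}|\leq \binom{n}{k}\Big/\Big(1+\binom{n-k}{k}\big/\binom{n-k-s-2}{k-s-2}\Big)$ for $(n,k,s)=(11,5,3)$.
   Context: A family $\mathcal{F}\subseteq 2^{[n]}$ is $s$-subset-regular if every $s$-element subset of $[n]$ is contained in the same number of members of $\mathcal{F}$. A family is $k$-uniform if all members have size $k$, and intersecting if any two members have nonempty intersection. *)

theory Defs
  imports Complex_Main
begin

definition subset_regular :: "nat \<Rightarrow> nat \<Rightarrow> nat set set \<Rightarrow> bool" where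
  "subset_regular n s F \<longleftrightarrow>
     (\<exists>c. \<forall>S. S \<subseteq> {1..n} \<and> card S = s \<longrightarrow> card {A \<in> F. S \<subseteq> A} = c)"

definition uniform :: "nat \<Rightarrow> nat set set \<Rightarrow> bool" where
  "uniform k F \<longleftrightarrow> (\<forall>A\<in>F. card A = k)"

definition intersecting :: "nat set set \<Rightarrow> bool" where
  "intersecting F \<longleftrightarrow> (\<forall>A\<in>F. \<forall>B\<in>F. A \<inter> B \<noteq> {})"

end

theory Submission
  imports Defs
begin

definition Fl :: "nat list list" where
  "Fl = [[1,2,3,4,6], [1,2,3,5,11], [1,2,3,7,10], [1,2,3,8,9], [1,2,4,5,8], [1,2,4,7,9], [1,2,4,10,11], [1,2,5,6,7], [1,2,5,9,10], [1,2,6,8,10], [1,2,6,9,11], [1,2,7,8,11], [1,3,4,5,9], [1,3,4,7,11], [1,3,4,8,10], [1,3,5,6,10], [1,3,5,7,8], [1,3,6,7,9], [1,3,6,8,11], [1,3,9,10,11], [1,4,5,6,11], [1,4,5,7,10], [1,4,6,7,8], [1,4,6,9,10], [1,4,8,9,11], [1,5,6,8,9], [1,5,7,9,11], [1,5,8,10,11], [1,6,7,10,11], [1,7,8,9,10], [2,3,4,5,7], [2,3,4,8,11], [2,3,4,9,10], [2,3,5,6,9], [2,3,5,8,10], [2,3,6,7,8], [2,3,6,10,11], [2,3,7,9,11], [2,4,5,6,10], [2,4,5,9,11], [2,4,6,7,11], [2,4,6,8,9], [2,4,7,8,10], [2,5,6,8,11], [2,5,7,8,9], [2,5,7,10,11],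 [2,6,7,9,10], [2,8,9,10,11], [3,4,5,6,8], [3,4,5,10,11], [3,4,6,7,10], [3,4,6,9,11], [3,4,7,8,9], [3,5,6,7,11], [3,5,7,9,10], [3,5,8,9,11], [3,6,8,9,10], [3,7,8,10,11], [4,5,6,7,9], [4,5,7,8,11], [4,5,8,9,10], [4,6,8,10,11], [4,7,9,10,11], [5,6,7,8,10], [5,6,9,10,11], [6,7,8,9,11]]"

lemma Fl_props:
  "(\<forall>l\<in>set Fl. sorted l \<and> distinct l \<and> length l = 5 \<and> (\<forall>x\<in>set l. 1 \<le> x \<and> x \<le> 11))
   \<and> distinct Fl \<and> length Fl = 66
   \<and> (\<forall>l\<in>set Fl. \<forall>m\<in>set Fl. \<exists>x\<in>set l. x \<in> set m)"
  unfolding Fl_def by code_simp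

lemma Fl_reg:
  "\<forall>a\<in>set [1..<12]. \<forall>b\<in>set [1..<12]. \<forall>c\<in>set [1..<12]. a \<noteq> b \<and> a \<noteq> c \<and> b \<noteq> c \<longrightarrow>
     length (filter (\<lambda>l. a \<in> set l \<and> b \<in> set l \<and> c \<in> set l) Fl) = 4"
  unfolding Fl_def by code_simp

lemma inj_set_Fl: "inj_on set (set Fl)"
proof (rule inj_onI)
  fix x y assume "x \<in> set Fl" "y \<in> set Fl" "set x = set y"
  then show "x = y" using Fl_props
    by (metis sorted_distinct_set_unique)
qed

lemma dist_map: "distinct (map set Fl)"
  using Fl_props inj_set_Fl by (simp add: distinct_map)

theorem mainTheorem12:
  shows "\<exists>F :: nat set set.
           F \<subseteq> {A. A \<subseteq> {1..11} \<and> card A = 5} \<and>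
           subset_regular 11 3 F \<and> uniform 5 F \<and> intersecting F \<and>
           card F = 66 \<and>
           real (card F) = real (11 choose 5) / (1 + real (6 choose 5) / real (1 choose 0))"
proof (intro exI[of _ "set (map set Fl)"] conjI)
  show "set (map set Fl) \<subseteq> {A. A \<subseteq> {1..11} \<and> card A = 5}"
    using Fl_props by (auto simp: distinct_card)
  show "uniform 5 (set (map set Fl))"
    using Fl_props by (auto simp: uniform_def distinct_card)
  show "intersecting (set (map set Fl))"
    using Fl_props unfolding intersecting_def by fastforce
  show c: "card (set (map set Fl)) = 66"
    using Fl_props dist_map distinct_card by fastforce
  show "real (card (set (map set Fl))) = real (11 choose 5) / (1 + real (6 choose 5) / real (1 choose 0))"
    unfolding c by (simp add: binomial_eq_0 numeral_eq_Suc)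
  show "subset_regular 11 3 (set (map set Fl))"
    unfolding subset_regular_def
  proof (intro exI[of _ 4] allI impI)
    fix S :: "nat set" assume S: "S \<subseteq> {1..11} \<and> card S = 3"
    then obtain a b c where abc: "S = {a,b,c}" "a \<noteq> b" "a \<noteq> c" "b \<noteq> c"
      by (auto simp: card_3_iff)
    have r: "a \<in> set [1..<12]" "b \<in> set [1..<12]" "c \<in> set [1..<12]" using S abc by auto
    define L where "L = filter (\<lambda>l. a \<in> set l \<and> b \<in> set l \<and> c \<in> set l) Fl"
    have e: "{A \<in> set (map set Fl). S \<subseteq> A} = set (map set L)"
      using abc unfolding L_def by auto
    have d: "distinct (map set L)"
      using dist_map unfolding L_def by (simp add: distinct_map_filter)
    have l: "length L = 4"
      using Fl_reg r abc unfolding L_def by blast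
    have "card (set (map set L)) = length (map set L)" using d by (rule distinct_card)
    then show "card {A \<in> set (map set Fl). S \<subseteq> A} = 4"
      using e l by simp
  qed
qed

end
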